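(* Let $1\le n_1\le n$ and let $([n_1],v,e),([n_1],u,g)$ be graphs. Extend both to size $n$ by $v_i=u_i=x_*$ and $e_{ii}=g_{ii}=y_0$ for $n_1+1\le i\le n$, and $e_{ii'}=g_{ii'}=y_*$ whenever $\max\{i,i'\}\ge n_1+1$ and $i\ne i'$. Then $D_n(([n],v,e),([n],u,g))\le D_{n_1}(([n_1],v,e),([n_1],u,g))$.
   Context: $(\mathcal X,d_{\mathcal X})$, $(\mathcal Y,d_{\mathcal Y})$ are pseudometric spaces with $\mathrm{diam}(\mathcal X)\le C_{\mathcal X}$, $\mathrm{diam}(\mathcal Y)\le C_{\mathcal Y}$, $y_0\in\mathcal Y$ a distinguished "no edge" element, $p\ge1$, $C_1^p\ge C_{\mathcal X}^p+\frac12C_{\mathcal Y}^p$. New points $x_*\notin\mathcal X$, $y_*\notin\mathcal Y$ are adjoined with $d_{\mathcal X}(x,x_* )^p=d_{\mathcal X}(x_*,x)^p=C_1^p-\frac12C_{\mathcal Y}^p$ for $x\in\mathcal X$, $d_{\mathcal X}(x_*,x_* )=0$, and $d_{\mathcal Y}(y,y_* )=d_{\mathcal Y}(y_*,y)=C_{\mathcal Y}$ for $y\in\mathcal Y$, $d_{\mathcal Y}(y_*,y_* )=0$. A graph $([n],v,e)$ has $v:[n]\to\mathcal X\cup\{x_*\}$ and symmetric $e:[n]^2\to\mathcal Y\cup\{y_*\}$ with $e_{ii}=y_0$; $S_n$ is the set of permutations of $[n]=\{1,\dots,n\}$. For two graphs of equal size $N\ge1$, $$D_N\big(([N],a,g),([N],b,h)\big)=N^{-1/p}\min_{\pi\in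 S_N}\Big[\sum_{i\in[N]}d_{\mathcal X}(a_i,b_{\pi(i)})^p+\frac{1}{2(N-1)}\sum_{(i,i')\in[N]^2}d_{\mathcal Y}(g_{ii'},h_{\pi(i)\pi(i')})^p\Big]^{1/p},$$ with $0/0:=0$ (this equals both GOSPA distances between graphs of equal size). *)

theory Defs
  imports "HOL-Analysis.Analysis" "HOL-Combinatorics.Permutations"
begin

definition pseudometric :: "('a \<Rightarrow> 'a \<Rightarrow> real) \<Rightarrow> bool" where
  "pseudometric d \<longleftrightarrow> (\<forall>x. d x x = 0) \<and> (\<forall>x y. d x y = d y x)
     \<and> (\<forall>x y z. d x z \<le> d x y + d y z)"

text \<open>Extended node space X \<union> {x_*}: None plays the role of x_*.
  d(x,x_*)^p = C1^p - CY^p/2.\<close>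
fun dX_ext :: "('x \<Rightarrow> 'x \<Rightarrow> real) \<Rightarrow> real \<Rightarrow> real \<Rightarrow> real \<Rightarrow> 'x option \<Rightarrow> 'x option \<Rightarrow> real" where
  "dX_ext dX p C1 CY (Some a) (Some b) = dX a b"
| "dX_ext dX p C1 CY None None = 0"
| "dX_ext dX p C1 CY _ _ = (C1 powr p - CY powr p / 2) powr (1 / p)"

text \<open>Extended edge space Y \<union> {y_*}: None plays the role of y_*.\<close>
fun dY_ext :: "('y \<Rightarrow> 'y \<Rightarrow> real) \<Rightarrow> real \<Rightarrow> 'y option \<Rightarrow> 'y option \<Rightarrow> real" where
  "dY_ext dY CY (Some a) (Some b) = dY a b"
| "dY_ext dY CY None None = 0"
| "dY_ext dY CY _ _ = CY"

text \<open>The bracketed cost for a permutation \<pi> of [N] = {1..N}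
  (with 1/(2(N-1)) = 0 when N = 1, matching 0/0 := 0).\<close>
definition graph_cost ::
  "('v \<Rightarrow> 'v \<Rightarrow> real) \<Rightarrow> ('w \<Rightarrow> 'w \<Rightarrow> real) \<Rightarrow> real \<Rightarrow> nat \<Rightarrow>
   (nat \<Rightarrow> 'v) \<Rightarrow> (nat \<Rightarrow> nat \<Rightarrow> 'w) \<Rightarrow> (nat \<Rightarrow> 'v) \<Rightarrow> (nat \<Rightarrow> nat \<Rightarrow> 'w) \<Rightarrow>
   (nat \<Rightarrow> nat) \<Rightarrow> real" where
  "graph_cost dV dE p N a g b h \<pi> =
     (\<Sum>i\<in>{1..N}. dV (a i) (b (\<pi> i)) powr p)
     + 1 / (2 * (real N - 1)) *
       (\<Sum>(i, i')\<in>{1..N} \<times> {1..N}. dE (g i i') (h (\<pi> i) (\<pi> i')) powr p)"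

definition D_graph ::
  "('v \<Rightarrow> 'v \<Rightarrow> real) \<Rightarrow> ('w \<Rightarrow> 'w \<Rightarrow> real) \<Rightarrow> real \<Rightarrow> nat \<Rightarrow>
   (nat \<Rightarrow> 'v) \<Rightarrow> (nat \<Rightarrow> nat \<Rightarrow> 'w) \<Rightarrow> (nat \<Rightarrow> 'v) \<Rightarrow> (nat \<Rightarrow> nat \<Rightarrow> 'w) \<Rightarrow> real" where
  "D_graph dV dE p N a g b h =
     real N powr (- 1 / p) *
     (Min {graph_cost dV dE p N a g b h \<pi> | \<pi>. \<pi> permutes {1..N}}) powr (1 / p)"

definition is_graph :: "'y \<Rightarrow> nat \<Rightarrow> (nat \<Rightarrow> nat \<Rightarrow> 'y option) \<Rightarrow> bool" where
  "is_graph y0 n e \<longleftrightarrow> (\<forall>i\<in>{1..n}. \<forall>i'\<in>{1..n}. e i i' = e i' i) \<and> (\<forall>i\<in>{1..n}. e i i = Some y0)"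

end

theory Submission
  imports Defs
begin

lemma real_ineq:
  fixes A S :: real and n1 n :: nat
  assumes "A \<ge> 0" "S \<ge> 0" "1 \<le> n1" "n1 \<le> n" "n1 = 1 \<Longrightarrow> S = 0"
  shows "(A + 1 / (2 * (real n - 1)) * S) / real n \<le> (A + 1 / (2 * (real n1 - 1)) * S) / real n1"
proof (cases "n1 = 1")
  case True
  then have "S = 0" using assms by auto
  moreover have "A \<le> A * real n" using assms by (simp add: mult_le_cancel_left1)
  ultimately show ?thesis using True assms by (simp add: divide_le_eq)
next
  case False
  then have n1: "real n1 \<ge> 2" using assms by auto
  have n: "real n \<ge> real n1" using assms by auto
  have a: "A / real n \<le> A / real n1" using n1 n assms(1)
    by (intro divide_left_mono) auto
  have "1 / (2 * (real n - 1)) * S / real n = S / (2 * (real n - 1) * real n)" by simp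
  also have "\<dots> \<le> S / (2 * (real n1 - 1) * real n1)" using n1 n assms(2)
    by (intro divide_left_mono mult_mono) auto
  also have "\<dots> = 1 / (2 * (real n1 - 1)) * S / real n1" by simp
  finally have b: "1 / (2 * (real n - 1)) * S / real n \<le> 1 / (2 * (real n1 - 1)) * S / real n1" .
  show ?thesis using a b by (simp add: add_divide_distrib)
qed

theorem lemmaA:
  fixes dX :: "'x \<Rightarrow> 'x \<Rightarrow> real" and dY :: "'y \<Rightarrow> 'y \<Rightarrow> real"
    and CX CY C1 p :: real and y0 :: 'y and n1 n :: nat
    and v u :: "nat \<Rightarrow> 'x option" and e g :: "nat \<Rightarrow> nat \<Rightarrow> 'y option"
  assumes "pseudometric dX" and "pseudometric dY"
    and "CX \<ge> 0" and "CY \<ge> 0" and "C1 \<ge> 0"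
    and "\<forall>a b. dX a b \<le> CX" and "\<forall>a b. dY a b \<le> CY"
    and "p \<ge> 1"
    and "C1 powr p \<ge> CX powr p + CY powr p / 2"
    and "1 \<le> n1" and "n1 \<le> n"
    and "is_graph y0 n1 e" and "is_graph y0 n1 g"
    and "\<forall>i\<in>{n1+1..n}. v i = None \<and> u i = None"
    and "\<forall>i\<in>{n1+1..n}. e i i = Some y0 \<and> g i i = Some y0"
    and "\<forall>i\<in>{1..n}. \<forall>i'\<in>{1..n}. max i i' \<ge> n1 + 1 \<and> i \<noteq> i' \<longrightarrow>
           e i i' = None \<and> g i i' = None"
  shows "D_graph (dX_ext dX p C1 CY) (dY_ext dY CY) p n v e u g
         \<le> D_graph (dX_ext dX p C1 CY) (dY_ext dY CY) p n1 v e u g"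
proof -
  let ?dV = "dX_ext dX p C1 CY" and ?dE = "dY_ext dY CY"
  let ?c = "\<lambda>N \<pi>. graph_cost ?dV ?dE p N v e u g \<pi>"
  have dy0: "dY y0 y0 = 0" using assms(2) unfolding pseudometric_def by auto
  have p0: "p > 0" using assms(8) by auto
  have setfin: "\<And>N. {?c N \<pi> | \<pi>. \<pi> permutes {1..N}} = (?c N) ` {\<pi>. \<pi> permutes {1..N}}" by auto
  have fin: "\<And>N. finite {?c N \<pi> | \<pi>. \<pi> permutes {1..N}}"
    unfolding setfin by (intro finite_imageI finite_permutations) auto
  have ne: "\<And>N. {?c N \<pi> | \<pi>. \<pi> permutes {1..N}} \<noteq> {}" using permutes_id by blast
  obtain \<pi> where pi: "\<pi> permutes {1..n1}"
    and pimin: "Min {?c n1 \<pi> | \<pi>. \<pi> permutes {1..n1}} = ?c n1 \<pi>"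
    using Min_in[OF fin ne, of n1] by auto
  have pin: "\<pi> permutes {1..n}" by (rule permutes_subset[OF pi]) (use assms(11) in auto)
  have fixd: "\<And>i. i \<notin> {1..n1} \<Longrightarrow> \<pi> i = i" using pi permutes_not_in by metis
  have inr: "\<And>i. i \<in> {1..n1} \<Longrightarrow> \<pi> i \<in> {1..n1}" using pi permutes_in_image by metis
  define A where "A = (\<Sum>i\<in>{1..n1}. ?dV (v i) (u (\<pi> i)) powr p)"
  define S where "S = (\<Sum>(i, i')\<in>{1..n1} \<times> {1..n1}. ?dE (e i i') (g (\<pi> i) (\<pi> i')) powr p)"
  have A0: "A \<ge> 0" unfolding A_def by (intro sum_nonneg) auto
  have S0: "S \<ge> 0" unfolding S_def by (intro sum_nonneg) auto
  have cn1: "?c n1 \<pi> = A + 1 / (2 * (real n1 - 1)) * S"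
    unfolding graph_cost_def A_def S_def by simp
  have Anode: "(\<Sum>i\<in>{1..n}. ?dV (v i) (u (\<pi> i)) powr p) = A"
    unfolding A_def
  proof (rule sum.mono_neutral_right)
    show "finite {1..n}" by simp
    show "{1..n1} \<subseteq> {1..n}" using assms(11) by auto
    show "\<forall>i\<in>{1..n} - {1..n1}. ?dV (v i) (u (\<pi> i)) powr p = 0"
    proof
      fix i assume i: "i \<in> {1..n} - {1..n1}"
      then have "v i = None" "u i = None" "\<pi> i = i" using assms(14) fixd by auto
      then show "?dV (v i) (u (\<pi> i)) powr p = 0" by simp
    qed
  qed
  have Sedge: "(\<Sum>(i, i')\<in>{1..n} \<times> {1..n}. ?dE (e i i') (g (\<pi> i) (\<pi> i')) powr p) = S"
    unfolding S_def
  proof (rule sum.mono_neutral_right)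
    show "finite ({1..n} \<times> {1..n})" by simp
    show "{1..n1} \<times> {1..n1} \<subseteq> {1..n} \<times> {1..n}" using assms(11) by auto
    show "\<forall>x\<in>{1..n} \<times> {1..n} - {1..n1} \<times> {1..n1}.
            (\<lambda>(i, i'). ?dE (e i i') (g (\<pi> i) (\<pi> i')) powr p) x = 0"
    proof
      fix x assume x: "x \<in> {1..n} \<times> {1..n} - {1..n1} \<times> {1..n1}"
      obtain i i' where xi: "x = (i, i')" by (cases x)
      have ii: "i \<in> {1..n}" "i' \<in> {1..n}" "i \<notin> {1..n1} \<or> i' \<notin> {1..n1}" using x xi by auto
      have pii: "\<pi> i \<in> {1..n}" "\<pi> i' \<in> {1..n}" using pin ii permutes_in_image by metis+
      show "(\<lambda>(i, i'). ?dE (e i i') (g (\<pi> i) (\<pi> i')) powr p) x = 0"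
      proof (cases "i = i'")
        case True
        then have "i \<in> {n1+1..n}" using ii by auto
        then have "e i i = Some y0" "g i i = Some y0" "\<pi> i = i" using assms(15) fixd by auto
        then show ?thesis using xi True dy0 by simp
      next
        case False
        have "\<pi> i \<noteq> \<pi> i'" using False pin by (metis permutes_inj injD)
        moreover have "max (\<pi> i) (\<pi> i') \<ge> n1 + 1"
          using ii fixd by (cases "i \<in> {1..n1}") auto
        moreover have "max i i' \<ge> n1 + 1" using ii by auto
        ultimately have "e i i' = None" "g (\<pi> i) (\<pi> i') = None"
          using assms(16) ii pii False by blast+
        then show ?thesis using xi by simp
      qed
    qed
  qed
  have cn: "?c n \<pi> = A + 1 / (2 * (real n - 1)) * S"
    unfolding graph_cost_def using Anode Sedge by simp
  have S1: "n1 = 1 \<Longrightarrow> S = 0"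
  proof -
    assume "n1 = 1"
    then have "\<pi> 1 = 1" using inr by auto
    moreover have "e 1 1 = Some y0" "g 1 1 = Some y0" using assms(12,13) \<open>n1 = 1\<close>
      unfolding is_graph_def by auto
    ultimately show "S = 0" unfolding S_def using \<open>n1 = 1\<close> dy0 by simp
  qed
  have ineq: "?c n \<pi> / real n \<le> ?c n1 \<pi> / real n1"
    unfolding cn cn1 using real_ineq[OF A0 S0 assms(10,11) S1] .
  have c0: "?c n \<pi> \<ge> 0" using cn A0 S0 assms(10,11) by simp
  have minle: "Min {?c n \<pi> | \<pi>. \<pi> permutes {1..n}} \<le> ?c n \<pi>"
    using fin pin by (intro Min_le) auto
  have min0: "Min {?c n \<pi> | \<pi>. \<pi> permutes {1..n}} \<ge> 0"
  proof -
    obtain s where "s \<in> {?c n \<pi> | \<pi>. \<pi> permutes {1..n}}" "Min {?c n \<pi> | \<pi>. \<pi> permutes {1..n}} = s"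
      using Min_in[OF fin ne, of n] by auto
    then obtain \<sigma> where "Min {?c n \<pi> | \<pi>. \<pi> permutes {1..n}} = ?c n \<sigma>" by auto
    moreover have "?c n \<sigma> \<ge> 0" unfolding graph_cost_def
      using assms(10,11) by (intro add_nonneg_nonneg mult_nonneg_nonneg sum_nonneg) auto
    ultimately show ?thesis by simp
  qed
  have npos: "real n > 0" "real n1 > 0" using assms(10,11) by auto
  have eqN: "\<And>N c. real N > 0 \<Longrightarrow> c \<ge> 0 \<Longrightarrow> real N powr (- 1 / p) * c powr (1 / p) = (c / real N) powr (1 / p)"
  proof -
    fix N :: nat and c :: real assume N: "real N > 0" and c: "c \<ge> 0"
    have "real N powr (- 1 / p) = (1 / real N) powr (1 / p)"
      using N by (simp add: powr_minus_divide powr_divide)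
    then show "real N powr (- 1 / p) * c powr (1 / p) = (c / real N) powr (1 / p)"
      using N c by (simp add: powr_divide)
  qed
  have c1: "?c n1 \<pi> \<ge> 0" using cn1 A0 S0 assms(10) by (cases "n1 = 1") auto
  have "D_graph ?dV ?dE p n v e u g \<le> real n powr (- 1 / p) * (?c n \<pi>) powr (1 / p)"
    unfolding D_graph_def using minle min0 p0
    by (intro mult_left_mono powr_mono2) auto
  also have "\<dots> = (?c n \<pi> / real n) powr (1 / p)" using eqN[OF npos(1) c0] .
  also have "\<dots> \<le> (?c n1 \<pi> / real n1) powr (1 / p)"
    using ineq c0 npos p0 by (intro powr_mono2) auto
  also have "\<dots> = D_graph ?dV ?dE p n1 v e u g"
    unfolding D_graph_def pimin using eqN[OF npos(2) c1] by simp
  finally show ?thesis .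
qed

end
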